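(* Let $\mu>1$, $\gamma=\mu\gamma_1^N$, $0<\alpha<1/4$, $\rho_k=4k^\alpha$. Define, for $z\in\widehat{\mathbb{R}}^N$, $$R(z)=\widetilde G_N(z)+\tfrac14-(z_0+1)^2-\tfrac12\sum_{k=1}^{N-1}\nu_{k,N}|z_k|^2.$$ There exist constants $A_9<\infty$ and $\delta_0>0$ such that for all $N\ge3$, all $0<\delta<\delta_0$ and all $z\in C_\delta(I_-)$, $|R(z)|\le A_9\delta^3$, where $C_\delta(I_-)=\{z\in\widehat{\mathbb{R}}^N:|z_0+1|\le\delta/\sqrt2,\ |z_k|\le\delta r_{k,N}/\sqrt{\nu_{k,N}}\ \text{for }1\le k\le N-1\}$.
   Context: Indices modulo $N$; $F_{\gamma,N}(x)=\sum_{i=0}^{N-1}(\tfrac14x_i^4-\tfrac12x_i^2)+\tfrac\gamma4\sum_{i=0}^{N-1}(x_i-x_{i+1})^2$; $\gamma_1^N=\frac1{2\sin^2(\pi/N)}$; $G_N=N^{-1}F_{\gamma,N}$; $\lambda_{k,N}=-1+2\gamma\sin^2(k\pi/N)$ and $\nu_{k,N}=\lambda_{k,N}+3$ (eigenvalues of $\nabla^2F_{\gamma,N}$ at $I_\pm=\pm(1,\dots,1)$; $\nu_{0,N}=2$). $\omega=e^{2\pi i/N}$; $\widehat{\mathbb{R}}^N=\{z\in\mathbb{C}^N:z_k=\overline{z_{N-k}}\}$; $x_j(Nz)=\sum_k\omega^{jk}z_k$; $\widetilde G_N(z)=G_N(x(Nz))$; in these coordinates $I_-$ corresponds to $z=(-1,0,\dots,0)$.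 $r_{k,N}=r_{N-k,N}=\rho_k$ for $1\le k\le\lfloor N/2\rfloor$. *)

theory Defs
  imports "HOL-Analysis.Analysis"
begin

text \<open>Vectors in R^N / C^N are represented as functions on nat, indices 0..N-1
  (indices taken modulo N).\<close>

definition F_gN :: "real \<Rightarrow> nat \<Rightarrow> (nat \<Rightarrow> real) \<Rightarrow> real" where
  "F_gN \<gamma> N x = (\<Sum>i<N. (1/4) * x i ^ 4 - (1/2) * x i ^ 2)
      + \<gamma> / 4 * (\<Sum>i<N. (x i - x ((i + 1) mod N)) ^ 2)"

definition gamma1 :: "nat \<Rightarrow> real" where
  "gamma1 N = 1 / (2 * sin (pi / real N) ^ 2)"

definition G_N :: "real \<Rightarrow> nat \<Rightarrow> (nat \<Rightarrow> real) \<Rightarrow> real" where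
  "G_N \<gamma> N x = F_gN \<gamma> N x / real N"

definition lam :: "real \<Rightarrow> nat \<Rightarrow> nat \<Rightarrow> real" where
  "lam \<gamma> N k = -1 + 2 * \<gamma> * sin (real k * pi / real N) ^ 2"

definition nu :: "real \<Rightarrow> nat \<Rightarrow> nat \<Rightarrow> real" where
  "nu \<gamma> N k = lam \<gamma> N k + 3"

definition omega :: "nat \<Rightarrow> complex" where
  "omega N = cis (2 * pi / real N)"

text \<open>The space hat-R^N of conjugate-symmetric complex vectors (entries beyond N-1 set to 0).\<close>
definition hatR :: "nat \<Rightarrow> (nat \<Rightarrow> complex) set" where
  "hatR N = {z. (\<forall>k<N. z k = cnj (z ((N - k) mod N))) \<and> (\<forall>k\<ge>N. z k = 0)}"

text \<open>x_j(Nz) = sum_k omega^{jk} z_k (real for z in hat-R^N; we take the real part).\<close>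
definition xvec :: "nat \<Rightarrow> (nat \<Rightarrow> complex) \<Rightarrow> nat \<Rightarrow> real" where
  "xvec N z j = Re (\<Sum>k<N. omega N ^ (j * k) * z k)"

definition Gtilde :: "real \<Rightarrow> nat \<Rightarrow> (nat \<Rightarrow> complex) \<Rightarrow> real" where
  "Gtilde \<gamma> N z = G_N \<gamma> N (xvec N z)"

definition rho :: "real \<Rightarrow> nat \<Rightarrow> real" where
  "rho \<alpha> k = 4 * real k powr \<alpha>"

definition r_kN :: "real \<Rightarrow> nat \<Rightarrow> nat \<Rightarrow> real" where
  "r_kN \<alpha> N k = rho \<alpha> (min k (N - k))"

definition Rrem :: "real \<Rightarrow> nat \<Rightarrow> (nat \<Rightarrow> complex) \<Rightarrow> real" where
  "Rrem \<gamma> N z = Gtilde \<gamma> N z + 1/4 - (Re (z 0) + 1) ^ 2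
      - (1/2) * (\<Sum>k\<in>{1..N-1}. nu \<gamma> N k * (cmod (z k)) ^ 2)"

definition C_delta :: "real \<Rightarrow> real \<Rightarrow> nat \<Rightarrow> real \<Rightarrow> (nat \<Rightarrow> complex) set" where
  "C_delta \<gamma> \<alpha> N \<delta> = {z \<in> hatR N. cmod (z 0 + 1) \<le> \<delta> / sqrt 2 \<and>
      (\<forall>k\<in>{1..N-1}. cmod (z k) \<le> \<delta> * r_kN \<alpha> N k / sqrt (nu \<gamma> N k))}"

end

theory Submission
  imports Defs
begin

lemma omega_pow: "omega N ^ n = cis (2 * pi * real n / real N)"
  unfolding omega_def by (simp add: Complex.DeMoivre algebra_simps)

lemma omega_N: "N > 0 \<Longrightarrow> omega N ^ N = 1"
  by (simp add: omega_pow)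

lemma omega_mod: assumes "N > 0" shows "omega N ^ a = omega N ^ (a mod N)"
proof -
  have "a = N * (a div N) + a mod N" by simp
  then have "omega N ^ a = (omega N ^ N) ^ (a div N) * omega N ^ (a mod N)"
    by (metis power_add power_mult)
  then show ?thesis using omega_N[OF assms] by simp
qed

lemma omega_cong: assumes "N > 0" "a mod N = b mod N" shows "omega N ^ a = omega N ^ b"
  using omega_mod[OF assms(1), of a] omega_mod[OF assms(1), of b] assms(2) by simp

lemma omega_dvd: assumes "N > 0" "N dvd a" shows "omega N ^ a = 1"
  using omega_mod[OF assms(1), of a] assms(2) by simp

lemma norm_omega_pow[simp]: "cmod (omega N ^ n) = 1"
  by (simp add: omega_pow)

lemma cnj_omega_mult: "cnj (omega N ^ a) * omega N ^ a = 1"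
  by (metis complex_norm_square mult.commute norm_omega_pow of_real_1 power_one)

lemma omega_ne1: assumes "0 < m" "m < N" shows "omega N ^ m \<noteq> 1"
proof
  assume "omega N ^ m = 1"
  then have "cos (2 * pi * real m / real N) = 1"
    by (simp add: omega_pow cis.ctr complex_eq_iff)
  then obtain n :: int where n: "2 * pi * real m / real N = real_of_int n * 2 * pi"
    using cos_one_2pi_int by blast
  have N0: "real N > 0" using assms by simp
  from n have "pi * (2 * real m) = pi * (2 * (real_of_int n * real N))" using N0 by (simp add: field_simps)
  then have "real m = real_of_int n * real N" using pi_gt_zero by simp
  then have "real m / real N = n" using N0 by simp
  moreover have "0 < real m / real N" "real m / real N < 1" using assms by auto
  ultimately have "0 < real_of_int n" "real_of_int n < 1" by auto
  then have "0 < n" "n < 1" by linarith+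
  then show False by simp
qed

lemma omega_inj: assumes "k < N" "l < N" "omega N ^ k = omega N ^ l" shows "k = l"
proof (rule ccontr)
  assume ne: "k \<noteq> l"
  have nz: "omega N ^ n \<noteq> 0" for n by (metis norm_omega_pow norm_zero zero_neq_one)
  have o0: "omega N \<noteq> 0" using nz[of 1] by simp
  show False
  proof (cases "l < k")
    case True
    then have "omega N ^ (k - l) * omega N ^ l = omega N ^ l" using assms(3)
      by (metis le_add_diff_inverse2 less_imp_le power_add)
    then have "omega N ^ (k - l) = 1" using o0 by simp
    then show False using omega_ne1[of "k-l" N] True assms by simp
  next
    case False
    then have "k < l" using ne by simp
    then have "omega N ^ (l - k) * omega N ^ k = omega N ^ k" using assms(3)
      by (metis le_add_diff_inverse2 less_imp_le power_add)
    then have "omega N ^ (l - k) = 1" using o0 by simp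
    then show False using omega_ne1[of "l-k" N] \<open>k < l\<close> assms by simp
  qed
qed

lemma orth: assumes "k < N" "l < N"
  shows "(\<Sum>j<N. omega N ^ (j*k) * cnj (omega N ^ (j*l))) = (if k = l then of_nat N else 0)"
proof -
  have N0: "N > 0" using assms by simp
  define q where "q = omega N ^ k * cnj (omega N ^ l)"
  have e: "omega N ^ (j*k) * cnj (omega N ^ (j*l)) = q ^ j" for j
    unfolding q_def by (simp add: power_mult_distrib mult.commute[of j] power_mult)
  show ?thesis
  proof (cases "k = l")
    case True
    then have "q = 1" unfolding q_def using cnj_omega_mult[of N l] by (simp add: mult.commute)
    have "(\<Sum>j<N. omega N ^ (j*k) * cnj (omega N ^ (j*l))) = (\<Sum>j<N. q^j)" by (simp only: e)
    then show ?thesis using True \<open>q = 1\<close> by simp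
  next
    case False
    have "q \<noteq> 1"
    proof
      assume "q = 1"
      then have "omega N ^ k * (cnj (omega N ^ l) * omega N ^ l) = omega N ^ l"
        unfolding q_def by (metis mult.assoc mult_1)
      then have "omega N ^ k = omega N ^ l" by (simp only: cnj_omega_mult mult_1_right)
      then show False using omega_inj assms False by blast
    qed
    moreover have "q ^ N = 1"
    proof -
      have "q ^ N = (omega N ^ N) ^ k * cnj ((omega N ^ N) ^ l)"
        unfolding q_def by (simp add: power_mult_distrib flip: power_mult) (simp add: mult.commute)
      then show ?thesis using omega_N[OF N0] by simp
    qed
    moreover have "(\<Sum>j<N. omega N ^ (j*k) * cnj (omega N ^ (j*l))) = (\<Sum>j<N. q^j)" by (simp only: e)
    ultimately show ?thesis using False by (simp add: geometric_sum)
  qed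
qed

lemma parseval: assumes "N > 0"
  shows "(\<Sum>j<N. (cmod (\<Sum>k<N. omega N ^ (j*k) * c k))^2) = real N * (\<Sum>k<N. (cmod (c k))^2)"
proof -
  have "complex_of_real (\<Sum>j<N. (cmod (\<Sum>k<N. omega N ^ (j*k) * c k))^2)
      = (\<Sum>j<N. (\<Sum>k<N. omega N ^ (j*k) * c k) * cnj (\<Sum>l<N. omega N ^ (j*l) * c l))"
    by (simp only: of_real_sum complex_norm_square)
  also have "\<dots> = (\<Sum>j<N. \<Sum>l<N. \<Sum>k<N. c k * cnj (c l) * (omega N ^ (j*k) * cnj (omega N ^ (j*l))))"
    by (simp add: sum_distrib_left sum_distrib_right cnj_sum algebra_simps)
  also have "\<dots> = (\<Sum>l<N. \<Sum>j<N. \<Sum>k<N. c k * cnj (c l) * (omega N ^ (j*k) * cnj (omega N ^ (j*l))))"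
    by (rule sum.swap)
  also have "\<dots> = (\<Sum>l<N. \<Sum>k<N. \<Sum>j<N. c k * cnj (c l) * (omega N ^ (j*k) * cnj (omega N ^ (j*l))))"
    by (rule sum.cong[OF refl], rule sum.swap)
  also have "\<dots> = (\<Sum>k<N. \<Sum>l<N. \<Sum>j<N. c k * cnj (c l) * (omega N ^ (j*k) * cnj (omega N ^ (j*l))))"
    by (rule sum.swap)
  also have "\<dots> = (\<Sum>k<N. \<Sum>l<N. c k * cnj (c l) * (\<Sum>j<N. omega N ^ (j*k) * cnj (omega N ^ (j*l))))"
    by (simp add: sum_distrib_left)
  also have "\<dots> = (\<Sum>k<N. \<Sum>l<N. c k * cnj (c l) * (if k = l then of_nat N else 0))"
    by (intro sum.cong refl, subst orth, auto)
  also have "\<dots> = (\<Sum>k<N. c k * cnj (c k) * of_nat N)"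
    by (simp add: if_distrib cong: if_cong)
  also have "\<dots> = complex_of_real (real N * (\<Sum>k<N. (cmod (c k))^2))"
    by (simp only: of_real_mult of_real_sum complex_norm_square sum_distrib_left of_real_of_nat_eq mult.commute)
  finally show ?thesis using of_real_eq_iff by blast
qed

lemma shift_sum: fixes k N :: nat assumes "k < N"
  shows "(\<Sum>m<N. f ((m + N - k) mod N)) = (\<Sum>l<N. f l)"
proof (rule sum.reindex_bij_witness[where i="\<lambda>l. (l + k) mod N" and j="\<lambda>m. (m + N - k) mod N"])
  fix a assume a: "a \<in> {..<N}"
  have "((a + N - k) mod N + k) mod N = (a + N - k + k) mod N" by (metis mod_add_left_eq)
  also have "a + N - k + k = a + N" using assms by simp
  finally show "((a + N - k) mod N + k) mod N = a" using a by simp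
  show "(a + N - k) mod N \<in> {..<N}" using assms by simp
next
  fix b assume b: "b \<in> {..<N}"
  have "((b + k) mod N + N - k) mod N = ((b + k) mod N + (N - k)) mod N" using assms by simp
  also have "\<dots> = (b + k + (N - k)) mod N" by (metis mod_add_left_eq)
  also have "b + k + (N - k) = b + N" using assms by simp
  finally show "((b + k) mod N + N - k) mod N = b" using b by simp
  show "(b + k) mod N \<in> {..<N}" using assms by simp
qed simp

lemma refl_idx: fixes k N :: nat assumes "k < N" shows "(N - (N - k) mod N) mod N = k"
proof (cases "k = 0")
  case True then show ?thesis by simp
next
  case False then have "(N - k) mod N = N - k" using assms by simp
  then show ?thesis using assms False by simp
qed

lemma refl_sum: fixes N :: nat shows "(\<Sum>k<N. f ((N - k) mod N)) = (\<Sum>l<N. f l)"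
proof (rule sum.reindex_bij_witness[where i="\<lambda>l. (N - l) mod N" and j="\<lambda>m. (N - m) mod N"])
  fix a assume "a \<in> {..<N}" then show "(N - (N - a) mod N) mod N = a" by (simp add: refl_idx)
next
  fix b assume "b \<in> {..<N}" then show "(N - (N - b) mod N) mod N = b" by (simp add: refl_idx)
qed (auto intro!: mod_less_divisor)

lemma cnj_omega_refl: assumes "k < N"
  shows "cnj (omega N ^ (j*k)) = omega N ^ (j * ((N - k) mod N))"
proof -
  have N0: "N > 0" using assms by simp
  have "N dvd (k + (N - k) mod N)"
    using assms by (cases "k = 0") auto
  then have "N dvd (j*k + j * ((N - k) mod N))" by (metis add_mult_distrib2 dvd_mult)
  then have "omega N ^ (j*k) * omega N ^ (j * ((N - k) mod N)) = 1"
    using omega_dvd[OF N0] by (simp flip: power_add)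
  then have "cnj (omega N ^ (j*k)) = cnj (omega N ^ (j*k)) * (omega N ^ (j*k) * omega N ^ (j * ((N - k) mod N)))"
    by simp
  also have "\<dots> = omega N ^ (j * ((N - k) mod N))"
    using cnj_omega_mult[of N "j*k"] by (simp add: mult.assoc[symmetric])
  finally show ?thesis .
qed

lemma Y_real: assumes sym: "\<forall>k<N. w k = cnj (w ((N - k) mod N))"
  shows "Im (\<Sum>k<N. omega N ^ (j*k) * w k) = 0"
proof -
  have "cnj (\<Sum>k<N. omega N ^ (j*k) * w k) = (\<Sum>k<N. cnj (omega N ^ (j*k)) * cnj (w k))"
    by (simp add: cnj_sum)
  also have "\<dots> = (\<Sum>k<N. omega N ^ (j * ((N - k) mod N)) * w ((N - k) mod N))"
  proof (rule sum.cong[OF refl])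
    fix k assume k: "k \<in> {..<N}"
    then have N0: "N > 0" by auto
    have "w ((N - k) mod N) = cnj (w ((N - (N - k) mod N) mod N))"
      using sym[rule_format, of "(N - k) mod N"] N0 by (simp only: mod_less_divisor simp_thms)
    then have "cnj (w k) = w ((N - k) mod N)" using refl_idx[of k N] k by simp
    then show "cnj (omega N ^ (j*k)) * cnj (w k) = omega N ^ (j * ((N - k) mod N)) * w ((N - k) mod N)"
      using cnj_omega_refl[of k N j] k by simp
  qed
  also have "\<dots> = (\<Sum>k<N. omega N ^ (j*k) * w k)"
    by (rule refl_sum[where f="\<lambda>l. omega N ^ (j*l) * w l"])
  finally show ?thesis using Reals_cnj_iff complex_is_Real_iff by blast
qed

lemma conv_sq: assumes "N > 0"
  shows "(\<Sum>k<N. omega N ^ (j*k) * w k)^2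
     = (\<Sum>m<N. omega N ^ (j*m) * (\<Sum>k<N. w k * w ((m + N - k) mod N)))"
proof -
  have "(\<Sum>k<N. omega N ^ (j*k) * w k)^2 = (\<Sum>k<N. \<Sum>l<N. (omega N ^ (j*k) * w k) * (omega N ^ (j*l) * w l))"
    by (simp add: power2_eq_square sum_product)
  also have "\<dots> = (\<Sum>k<N. \<Sum>m<N. omega N ^ (j*m) * (w k * w ((m + N - k) mod N)))"
  proof (rule sum.cong[OF refl])
    fix k assume k: "k \<in> {..<N}"
    have "(\<Sum>l<N. (omega N ^ (j*k) * w k) * (omega N ^ (j*l) * w l))
        = (\<Sum>m<N. (omega N ^ (j*k) * w k) * (omega N ^ (j*((m + N - k) mod N)) * w ((m + N - k) mod N)))"
      using shift_sum[of k N "\<lambda>l. (omega N ^ (j*k) * w k) * (omega N ^ (j*l) * w l)"] k by simp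
    also have "\<dots> = (\<Sum>m<N. omega N ^ (j*m) * (w k * w ((m + N - k) mod N)))"
    proof (rule sum.cong[OF refl])
      fix m assume m: "m \<in> {..<N}"
      have "(j*k + j*((m + N - k) mod N)) mod N = (j*k + j*(m + N - k)) mod N"
        by (metis mod_add_right_eq mod_mult_right_eq)
      also have "j*k + j*(m + N - k) = j*m + j*N" using k
        by (simp add: add_mult_distrib2[symmetric] diff_mult_distrib2[symmetric])
      also have "(j*m + j*N) mod N = (j*m) mod N" by simp
      finally have "omega N ^ (j*k + j*((m + N - k) mod N)) = omega N ^ (j*m)"
        using omega_cong[OF assms] by blast
      then show "(omega N ^ (j*k) * w k) * (omega N ^ (j*((m + N - k) mod N)) * w ((m + N - k) mod N))
          = omega N ^ (j*m) * (w k * w ((m + N - k) mod N))"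
        by (simp add: power_add algebra_simps)
    qed
    finally show "(\<Sum>l<N. (omega N ^ (j*k) * w k) * (omega N ^ (j*l) * w l))
        = (\<Sum>m<N. omega N ^ (j*m) * (w k * w ((m + N - k) mod N)))" .
  qed
  also have "\<dots> = (\<Sum>m<N. \<Sum>k<N. omega N ^ (j*m) * (w k * w ((m + N - k) mod N)))"
    by (rule sum.swap)
  also have "\<dots> = (\<Sum>m<N. omega N ^ (j*m) * (\<Sum>k<N. w k * w ((m + N - k) mod N)))"
    by (simp add: sum_distrib_left)
  finally show ?thesis .
qed

lemma Y_diff: assumes "N > 0"
  shows "(\<Sum>k<N. omega N ^ (j*k) * w k) - (\<Sum>k<N. omega N ^ (((j+1) mod N)*k) * w k)
     = (\<Sum>k<N. omega N ^ (j*k) * ((1 - omega N ^ k) * w k))"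
proof -
  have "omega N ^ (((j+1) mod N)*k) = omega N ^ (j*k) * omega N ^ k" for k
  proof -
    have "omega N ^ (((j+1) mod N)*k) = omega N ^ ((j+1)*k)"
      by (rule omega_cong[OF assms]) (simp add: mod_mult_left_eq)
    then show ?thesis by (simp add: algebra_simps power_add)
  qed
  then have "\<And>k. omega N ^ (j*k) * w k - omega N ^ (((j+1) mod N)*k) * w k = omega N ^ (j*k) * ((1 - omega N ^ k) * w k)"
    by (simp add: right_diff_distrib left_diff_distrib mult.assoc)
  then show ?thesis by (simp only: sum_subtractf[symmetric])
qed

lemma norm_1_omega: "(cmod (1 - omega N ^ k))^2 = 4 * (sin (real k * pi / real N))^2"
proof -
  let ?t = "real k * pi / real N"
  have "omega N ^ k = cis (2 * ?t)" by (simp add: omega_pow algebra_simps)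
  then have "(cmod (1 - omega N ^ k))^2 = (1 - cos (2 * ?t))^2 + (sin (2 * ?t))^2"
    by (simp add: cmod_power2)
  also have "\<dots> = 2 - 2 * cos (2 * ?t)"
    using sin_cos_squared_add[of "2 * ?t"] by (simp add: power2_eq_square algebra_simps)
  also have "\<dots> = 4 * (sin ?t)^2" by (simp only: cos_double_sin) simp
  finally show ?thesis .
qed

lemma sin_ge_half: assumes "0 \<le> x" "x \<le> pi/2" shows "x / 2 \<le> sin x"
proof -
  have "\<bar>sin x - (\<Sum>m<3. sin_coeff m * x ^ m)\<bar> \<le> inverse (fact 3) * \<bar>x\<bar> ^ 3"
    by (rule Maclaurin_sin_bound)
  moreover have "(\<Sum>m<3. sin_coeff m * x ^ m) = x"
    by (simp add: numeral_3_eq_3 sin_coeff_Suc cos_coeff_def)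
  ultimately have "\<bar>sin x - x\<bar> \<le> x^3/6" using assms by (simp add: fact_numeral)
  then have "x - x^3/6 \<le> sin x" by linarith
  moreover have "x^2 \<le> 3"
  proof -
    have "x \<le> 1.6" using assms pi_approx by simp
    then have "x^2 \<le> 1.6^2" using assms by (intro power_mono) auto
    moreover have "(1.6::real)^2 \<le> 3" by (simp add: power2_eq_square)
    ultimately show ?thesis by linarith
  qed
  moreover have "x^3 = x * x^2" by (simp add: power2_eq_square power3_eq_cube)
  ultimately show ?thesis using assms mult_left_mono[of "x^2" 3 x] by simp
qed

lemma sin_k_eq: fixes k N :: nat assumes "k \<le> N" "N > 0"
  shows "sin (real k * pi / real N) = sin (real (min k (N - k)) * pi / real N)"
proof (cases "k \<le> N - k")
  case True then show ?thesis by simp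
next
  case False
  then have m: "min k (N - k) = N - k" by simp
  have "real (N - k) * pi / real N = pi - real k * pi / real N"
    using assms by (simp add: of_nat_diff field_simps)
  then show ?thesis by (simp add: m)
qed

lemma nu_lower: fixes N k :: nat and \<mu> :: real
  assumes "N \<ge> 3" "\<mu> \<ge> 1" "1 \<le> k" "k \<le> N - 1"
  shows "real (min k (N - k)) ^ 2 / 4 \<le> nu (\<mu> * gamma1 N) N k"
proof -
  define d where "d = min k (N - k)"
  have N0: "real N > 0" using assms by simp
  have d1: "1 \<le> d" "2 * d \<le> N" using assms unfolding d_def by auto
  define s1 where "s1 = sin (pi / real N)"
  define sk where "sk = sin (real k * pi / real N)"
  have s1pos: "s1 > 0" unfolding s1_def using assms by (intro sin_gt_zero) (auto simp: field_simps)
  have s1le: "s1 \<le> pi / real N" unfolding s1_def using abs_sin_x_le_abs_x[of "pi / real N"] N0 by simp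
  have skd: "sk = sin (real d * pi / real N)" unfolding sk_def d_def using assms by (intro sin_k_eq) auto
  have x0: "0 \<le> real d * pi / real N" using N0 by simp
  have x1: "real d * pi / real N \<le> pi / 2"
  proof -
    have "2 * real d \<le> real N" using d1(2) by linarith
    then have "real d / real N \<le> 1/2" using N0 by (simp add: divide_le_eq)
    then have "real d / real N * pi \<le> 1/2 * pi" by (rule mult_right_mono) simp
    then show ?thesis by simp
  qed
  have sklow: "real d * pi / real N / 2 \<le> sk" unfolding skd using sin_ge_half[OF x0 x1] .
  have "nu (\<mu> * gamma1 N) N k = 2 + \<mu> * sk^2 / s1^2"
    unfolding nu_def lam_def gamma1_def sk_def[symmetric] s1_def[symmetric] using s1pos by simp
  moreover have "real d ^ 2 / 4 \<le> sk^2 / s1^2"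
  proof -
    have "(real d * pi / real N / 2)^2 \<le> sk^2" using sklow x0 by (intro power_mono) auto
    moreover have "s1^2 \<le> (pi / real N)^2" using s1le s1pos by (intro power_mono) auto
    ultimately have "(real d * pi / real N / 2)^2 / (pi / real N)^2 \<le> sk^2 / s1^2"
      using s1pos by (intro frac_le) auto
    moreover have "(real d * pi / real N / 2)^2 / (pi / real N)^2 = real d ^ 2 / 4"
      using N0 pi_gt_zero by (simp add: field_simps power2_eq_square)
    ultimately show ?thesis by metis
  qed
  moreover have "sk^2 / s1^2 \<le> \<mu> * sk^2 / s1^2"
    using assms(2) by (simp add: divide_right_mono mult_le_cancel_right1)
  ultimately have "real d ^ 2 / 4 \<le> nu (\<mu> * gamma1 N) N k" by linarith
  then show ?thesis unfolding d_def .
qed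

lemma ratio_bound: fixes N k :: nat and \<mu> \<alpha> :: real
  assumes "N \<ge> 3" "\<mu> \<ge> 1" "1 \<le> k" "k \<le> N - 1"
  shows "r_kN \<alpha> N k / sqrt (nu (\<mu> * gamma1 N) N k) \<le> 8 * real (min k (N - k)) powr (\<alpha> - 1)"
proof -
  define d where "d = real (min k (N - k))"
  have d1: "d \<ge> 1" unfolding d_def using assms by auto
  have nl: "d^2/4 \<le> nu (\<mu> * gamma1 N) N k" using nu_lower[OF assms] unfolding d_def .
  have "d / 2 = sqrt (d^2/4)" using d1 by (simp add: real_sqrt_divide)
  also have "\<dots> \<le> sqrt (nu (\<mu> * gamma1 N) N k)" using nl by simp
  finally have sq: "d / 2 \<le> sqrt (nu (\<mu> * gamma1 N) N k)" .
  have r: "r_kN \<alpha> N k = 4 * d powr \<alpha>" unfolding r_kN_def rho_def d_def by simp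
  have "r_kN \<alpha> N k / sqrt (nu (\<mu> * gamma1 N) N k) \<le> 4 * d powr \<alpha> / (d / 2)"
  proof -
    have "0 < sqrt (nu (\<mu> * gamma1 N) N k)" using sq d1 by linarith
    then show ?thesis unfolding r using sq d1 by (intro divide_left_mono) auto
  qed
  also have "\<dots> = 8 * (d powr \<alpha> / d)" using d1 by simp
  also have "d powr \<alpha> / d = d powr (\<alpha> - 1)" using d1 by (simp add: powr_diff)
  finally show ?thesis unfolding d_def by simp
qed

lemma sum_min_bound: fixes N :: nat and s :: real assumes "s > 1"
  shows "(\<Sum>k\<in>{1..N-1}. real (min k (N - k)) powr (-s)) \<le> 2 * (\<Sum>n. real (Suc n) powr (-s))"
proof -
  let ?f = "\<lambda>n::nat. real n powr (-s)"
  have summ: "summable (\<lambda>n. real (Suc n) powr (-s))"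
  proof -
    have "summable (\<lambda>n. real n powr (-s))" using assms by (simp add: summable_real_powr_iff)
    then have "summable (\<lambda>n. real (n + 1) powr (-s))" by (rule summable_ignore_initial_segment)
    then show ?thesis by simp
  qed
  have pw: "(\<Sum>k\<in>{1..N-1}. ?f k) \<le> (\<Sum>n. real (Suc n) powr (-s))"
  proof -
    have "(\<Sum>k\<in>{1..N-1}. ?f k) = (\<Sum>n<N-1. real (Suc n) powr (-s))"
    proof (rule sum.reindex_bij_witness[where j="\<lambda>k. k - 1" and i="Suc"]) qed auto
    also have "\<dots> \<le> (\<Sum>n. real (Suc n) powr (-s))"
      by (rule sum_le_suminf[OF summ]) auto
    finally show ?thesis .
  qed
  have reflS: "(\<Sum>k\<in>{1..N-1}. ?f (N - k)) = (\<Sum>k\<in>{1..N-1}. ?f k)"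
    by (rule sum.reindex_bij_witness[where i="\<lambda>k. N - k" and j="\<lambda>k. N - k"]) auto
  have "(\<Sum>k\<in>{1..N-1}. real (min k (N - k)) powr (-s)) \<le> (\<Sum>k\<in>{1..N-1}. ?f k + ?f (N - k))"
  proof (rule sum_mono)
    fix k show "real (min k (N - k)) powr (-s) \<le> ?f k + ?f (N - k)"
      by (cases "k \<le> N - k") (auto simp: min_def)
  qed
  also have "\<dots> = 2 * (\<Sum>k\<in>{1..N-1}. ?f k)" by (simp only: sum.distrib reflS mult_2)
  finally show ?thesis using pw by simp
qed

lemma refl_shift_idx: fixes m N k :: nat assumes "m < N" "k < N"
  shows "(m + N - (m + N - k) mod N) mod N = k"
proof (cases "k \<le> m")
  case True
  have e1: "m + N - k = (m - k) + N" using True by simp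
  have "((m - k) + N) mod N = m - k" using assms by simp
  then have e2: "(m + N - k) mod N = m - k" by (simp only: e1)
  have e3: "m + N - (m - k) = k + N" using True assms by simp
  show ?thesis using assms by (simp only: e2 e3 mod_add_self2 mod_less)
next
  case False
  then have "(m + N - k) mod N = m + N - k" using assms by simp
  then show ?thesis using assms False by simp
qed

lemma refl_shift_sum: fixes m N :: nat assumes "m < N"
  shows "(\<Sum>k<N. f ((m + N - k) mod N)) = (\<Sum>l<N. f l)"
proof (rule sum.reindex_bij_witness[where i="\<lambda>l. (m + N - l) mod N" and j="\<lambda>l. (m + N - l) mod N"])
  fix a assume "a \<in> {..<N}" then show "(m + N - (m + N - a) mod N) mod N = a"
    using refl_shift_idx assms by simp
next
  fix b assume "b \<in> {..<N}" then show "(m + N - (m + N - b) mod N) mod N = b"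
    using refl_shift_idx assms by simp
qed (use assms in auto)

lemma young: fixes t :: "nat \<Rightarrow> real" and N :: nat assumes t0: "\<And>k. t k \<ge> 0"
  shows "(\<Sum>m<N. (\<Sum>k<N. t k^3 * t ((m+N-k) mod N)^3)^2) \<le> (\<Sum>k<N. t k^4)^3"
proof -
  define T where "T = (\<Sum>k<N. t k^4)"
  have q: "\<And>x::real. (x^2)^2 = x^4" by (simp flip: power_mult)
  have T0: "T \<ge> 0" unfolding T_def using t0 by (simp add: sum_nonneg)
  have per: "(\<Sum>k<N. t k^3 * t ((m+N-k) mod N)^3)^2 \<le> T * (\<Sum>k<N. t k^4 * t ((m+N-k) mod N)^4)"
    if m: "m < N" for m
  proof -
    define s where "s k = t ((m+N-k) mod N)" for k
    have s0: "s k \<ge> 0" for k unfolding s_def using t0 by simp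
    have sT: "(\<Sum>k<N. s k^4) = T" unfolding s_def T_def using refl_shift_sum[OF m, of "\<lambda>l. t l ^ 4"] by simp
    have "(\<Sum>k<N. t k^2 * s k^2)^2 \<le> (\<Sum>k<N. (t k^2)^2) * (\<Sum>k<N. (s k^2)^2)"
      by (rule Cauchy_Schwarz_ineq_sum)
    also have "\<dots> = T * T" using sT by (simp only: q T_def[symmetric])
    also have "\<dots> = T^2" by (simp add: power2_eq_square)
    finally have "(\<Sum>k<N. t k^2 * s k^2)^2 \<le> T^2" .
    then have h1: "(\<Sum>k<N. t k^2 * s k^2) \<le> T" using T0 by (rule power2_le_imp_le)
    have "(\<Sum>k<N. t k^3 * s k^3)^2 = (\<Sum>k<N. (t k^2 * s k^2) * (t k * s k))^2"
      by (simp add: power2_eq_square power3_eq_cube algebra_simps)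
    also have "\<dots> \<le> (\<Sum>k<N. (t k^2 * s k^2)^2) * (\<Sum>k<N. (t k * s k)^2)"
      by (rule Cauchy_Schwarz_ineq_sum)
    also have "\<dots> = (\<Sum>k<N. t k^4 * s k^4) * (\<Sum>k<N. t k^2 * s k^2)"
      by (simp only: power_mult_distrib q)
    also have "\<dots> \<le> (\<Sum>k<N. t k^4 * s k^4) * T"
      using h1 t0 s0 by (intro mult_left_mono sum_nonneg) auto
    finally show ?thesis unfolding s_def by (simp add: mult.commute)
  qed
  have "(\<Sum>m<N. (\<Sum>k<N. t k^3 * t ((m+N-k) mod N)^3)^2) \<le> (\<Sum>m<N. T * (\<Sum>k<N. t k^4 * t ((m+N-k) mod N)^4))"
    by (intro sum_mono per) simp
  also have "\<dots> = T * (\<Sum>m<N. \<Sum>k<N. t k^4 * t ((m+N-k) mod N)^4)"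
    by (simp only: sum_distrib_left)
  also have "\<dots> = T * (\<Sum>k<N. \<Sum>m<N. t k^4 * t ((m+N-k) mod N)^4)"
    by (subst sum.swap) (rule refl)
  also have "\<dots> = T * (\<Sum>k<N. t k^4 * (\<Sum>m<N. t ((m+N-k) mod N)^4))"
    by (simp only: sum_distrib_left)
  also have "\<dots> = T * (\<Sum>k<N. t k^4 * T)"
  proof -
    have "(\<Sum>m<N. t ((m+N-k) mod N)^4) = T" if "k \<in> {..<N}" for k
      using shift_sum[of k N "\<lambda>l. t l ^ 4"] that unfolding T_def by simp
    then show ?thesis by simp
  qed
  also have "\<dots> = T * (T * T)" by (simp only: sum_distrib_right[symmetric] T_def[symmetric])
  also have "\<dots> = T^3" by (simp add: power3_eq_cube)
  finally show ?thesis unfolding T_def .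
qed

lemma cube_root3: fixes x :: real assumes "x \<ge> 0" shows "(x powr (1/3))^3 = x"
proof (cases "x = 0")
  case True then show ?thesis by simp
next
  case False then show ?thesis using assms by (simp add: powr_power)
qed

lemma cube_root4: fixes x :: real assumes "x \<ge> 0" shows "(x powr (1/3))^4 = x powr (4/3)"
proof (cases "x = 0")
  case True then show ?thesis by simp
next
  case False then show ?thesis using assms by (simp add: powr_power)
qed

lemma L4_bound: fixes w :: "nat \<Rightarrow> complex" and N :: nat
  shows "(\<Sum>m<N. (cmod (\<Sum>k<N. w k * w ((m + N - k) mod N)))^2) \<le> (\<Sum>k<N. cmod (w k) powr (4/3))^3"
proof -
  define t where "t k = cmod (w k) powr (1/3)" for k
  have t0: "t k \<ge> 0" for k unfolding t_def by simp
  have t3: "t k ^ 3 = cmod (w k)" for k unfolding t_def by (simp add: cube_root3)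
  have t4: "t k ^ 4 = cmod (w k) powr (4/3)" for k unfolding t_def by (simp add: cube_root4)
  have "(\<Sum>m<N. (cmod (\<Sum>k<N. w k * w ((m + N - k) mod N)))^2)
      \<le> (\<Sum>m<N. (\<Sum>k<N. t k^3 * t ((m+N-k) mod N)^3)^2)"
  proof (rule sum_mono)
    fix m
    have "cmod (\<Sum>k<N. w k * w ((m + N - k) mod N)) \<le> (\<Sum>k<N. cmod (w k * w ((m + N - k) mod N)))"
      by (rule norm_sum)
    also have "\<dots> = (\<Sum>k<N. t k^3 * t ((m+N-k) mod N)^3)" by (simp add: t3 norm_mult)
    finally show "(cmod (\<Sum>k<N. w k * w ((m + N - k) mod N)))^2 \<le> (\<Sum>k<N. t k^3 * t ((m+N-k) mod N)^3)^2"
      by (intro power_mono) auto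
  qed
  also have "\<dots> \<le> (\<Sum>k<N. t k^4)^3" by (rule young) (rule t0)
  also have "\<dots> = (\<Sum>k<N. cmod (w k) powr (4/3))^3" by (simp add: t4)
  finally show ?thesis .
qed

lemma cube_amgm: fixes y d :: real assumes "d > 0"
  shows "\<bar>y\<bar>^3 \<le> (d * y^2 + y^4 / d) / 2"
proof -
  define a where "a = \<bar>y\<bar>"
  have a2: "y^2 = a^2" unfolding a_def by simp
  have a4: "y^4 = a^4" unfolding a_def by (metis power_abs power_even_abs_numeral even_numeral)
  have "0 \<le> (a * (d - a))^2" by simp
  also have "(a * (d - a))^2 = d * (d * a^2) + a^4 - d * (2 * a^3)"
    by (simp add: power2_eq_square power3_eq_cube power4_eq_xxxx algebra_simps)
  finally have "d * (2 * a^3) \<le> d * (d * a^2 + a^4 / d)" using assms by (simp add: algebra_simps)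
  then have "2 * a^3 \<le> d * a^2 + a^4 / d" using assms by simp
  then show ?thesis unfolding a_def[symmetric] a2 a4 by simp
qed

lemma sum_split0: fixes f :: "nat \<Rightarrow> 'a::comm_monoid_add" assumes "N > 0"
  shows "(\<Sum>k<N. f k) = f 0 + (\<Sum>k\<in>{1..N-1}. f k)"
proof -
  have "{..<N} = insert 0 {1..N-1}" using assms by auto
  then show ?thesis by simp
qed

lemma Rrem_formula:
  fixes N :: nat and z :: "nat \<Rightarrow> complex" and \<gamma> :: real
  assumes N0: "N > 0" and zh: "z \<in> hatR N"
  defines "w \<equiv> \<lambda>k. z k + (if k = 0 then 1 else 0)"
  defines "y \<equiv> \<lambda>j. Re (\<Sum>k<N. omega N ^ (j*k) * w k)"
  shows "Rrem \<gamma> N z = (\<Sum>j<N. y j^4/4 - y j^3) / real N"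
    and "(\<Sum>j<N. (y j)^2) = real N * (\<Sum>k<N. (cmod (w k))^2)"
    and "(\<Sum>j<N. (y j)^4) = real N * (\<Sum>m<N. (cmod (\<Sum>k<N. w k * w ((m + N - k) mod N)))^2)"
proof -
  have zsym: "\<forall>k<N. z k = cnj (z ((N - k) mod N))" using zh unfolding hatR_def mem_Collect_eq by (rule conjunct1)
  have z0: "Im (z 0) = 0"
  proof -
    have "z 0 = cnj (z 0)" using zsym[rule_format, of 0] N0 by simp
    then show ?thesis by (metis Reals_cnj_iff complex_is_Real_iff)
  qed
  have wsym: "\<forall>k<N. w k = cnj (w ((N - k) mod N))"
  proof (intro allI impI)
    fix k assume k: "k < N"
    show "w k = cnj (w ((N - k) mod N))"
    proof (cases "k = 0")
      case True
      have "z 0 = cnj (z 0)" using zsym[rule_format, of 0] N0 by simp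
      then show ?thesis unfolding w_def using True by simp
    next
      case False
      then have "(N - k) mod N = N - k" "N - k \<noteq> 0" using k by auto
      moreover have "z k = cnj (z ((N - k) mod N))" using zsym k by blast
      ultimately show ?thesis unfolding w_def using False by simp
    qed
  qed
  define Y where "Y j = (\<Sum>k<N. omega N ^ (j*k) * w k)" for j
  have Yr: "Y j = complex_of_real (y j)" for j
    using Y_real[OF wsym, of j] unfolding Y_def y_def by (simp add: complex_eq_iff)
  have xv: "xvec N z j = y j - 1" for j
  proof -
    have "(\<Sum>k<N. omega N ^ (j*k) * w k) = (\<Sum>k<N. omega N ^ (j*k) * z k) + (\<Sum>k<N. omega N ^ (j*k) * (if k = 0 then 1 else 0))"
      unfolding w_def by (simp add: distrib_left sum.distrib)
    also have "(\<Sum>k<N. omega N ^ (j*k) * (if k = 0 then 1 else 0)) = 1"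
      using N0 by (simp add: if_distrib[of "\<lambda>x. _ * x"] cong: if_cong)
    finally show ?thesis unfolding xvec_def y_def by simp
  qed
  have I2: "(\<Sum>j<N. (y j)^2) = real N * (\<Sum>k<N. (cmod (w k))^2)"
  proof -
    have "(\<Sum>j<N. (y j)^2) = (\<Sum>j<N. (cmod (Y j))^2)" by (simp add: Yr)
    also have "\<dots> = real N * (\<Sum>k<N. (cmod (w k))^2)" unfolding Y_def by (rule parseval[OF N0])
    finally show ?thesis .
  qed
  have I4: "(\<Sum>j<N. (y j)^4) = real N * (\<Sum>m<N. (cmod (\<Sum>k<N. w k * w ((m + N - k) mod N)))^2)"
  proof -
    have "(\<Sum>j<N. (y j)^4) = (\<Sum>j<N. (cmod ((Y j)^2))^2)"
      by (simp add: Yr norm_power flip: power_mult)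
    also have "\<dots> = (\<Sum>j<N. (cmod (\<Sum>m<N. omega N ^ (j*m) * (\<Sum>k<N. w k * w ((m + N - k) mod N))))^2)"
      unfolding Y_def by (simp only: conv_sq[OF N0])
    also have "\<dots> = real N * (\<Sum>m<N. (cmod (\<Sum>k<N. w k * w ((m + N - k) mod N)))^2)"
      by (rule parseval[OF N0])
    finally show ?thesis .
  qed
  have ID: "(\<Sum>j<N. (y j - y ((j+1) mod N))^2) = real N * (\<Sum>k<N. 4 * (sin (real k * pi / real N))^2 * (cmod (w k))^2)"
  proof -
    have "(\<Sum>j<N. (y j - y ((j+1) mod N))^2) = (\<Sum>j<N. (cmod (Y j - Y ((j+1) mod N)))^2)"
      by (simp add: Yr flip: of_real_diff)
    also have "\<dots> = (\<Sum>j<N. (cmod (\<Sum>k<N. omega N ^ (j*k) * ((1 - omega N ^ k) * w k)))^2)"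
      unfolding Y_def by (simp only: Y_diff[OF N0])
    also have "\<dots> = real N * (\<Sum>k<N. (cmod ((1 - omega N ^ k) * w k))^2)"
      by (rule parseval[OF N0])
    also have "\<dots> = real N * (\<Sum>k<N. 4 * (sin (real k * pi / real N))^2 * (cmod (w k))^2)"
      by (simp add: norm_mult power_mult_distrib norm_1_omega)
    finally show ?thesis .
  qed
  define P where "P = (\<Sum>j<N. (y j)^2)"
  define Q3 where "Q3 = (\<Sum>j<N. (y j)^3)"
  define Q4 where "Q4 = (\<Sum>j<N. (y j)^4)"
  define D where "D = (\<Sum>j<N. (y j - y ((j+1) mod N))^2)"
  define W0 where "W0 = (cmod (w 0))^2"
  define W where "W = (\<Sum>k\<in>{1..N-1}. (cmod (w k))^2)"
  define S where "S = (\<Sum>k\<in>{1..N-1}. (sin (real k * pi / real N))^2 * (cmod (w k))^2)"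
  have F: "F_gN \<gamma> N (xvec N z) = - real N / 4 + P - Q3 + Q4 / 4 + \<gamma> / 4 * D"
  proof -
    have "F_gN \<gamma> N (xvec N z) = (\<Sum>j<N. - 1/4 + (y j)^2 - (y j)^3 + (y j)^4 / 4) + \<gamma> / 4 * D"
      unfolding F_gN_def D_def xv
      by (simp add: power2_eq_square power3_eq_cube power4_eq_xxxx algebra_simps)
    also have "(\<Sum>j<N. - 1/4 + (y j)^2 - (y j)^3 + (y j)^4 / 4) = - real N / 4 + P - Q3 + Q4 / 4"
      unfolding P_def Q3_def Q4_def by (simp add: sum.distrib sum_subtractf sum_divide_distrib)
    finally show ?thesis .
  qed
  have P2: "P = real N * (W0 + W)" unfolding P_def I2 W0_def W_def by (simp add: sum_split0[OF N0])
  have D2: "D = real N * (4 * S)" unfolding D_def ID S_def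
    by (simp add: sum_split0[OF N0] sum_distrib_left mult.assoc)
  have W0z: "(Re (z 0) + 1)^2 = W0" unfolding W0_def w_def using z0 by (simp add: cmod_power2)
  have nuS: "(\<Sum>k\<in>{1..N-1}. nu \<gamma> N k * (cmod (z k))^2) = 2 * W + 2 * \<gamma> * S"
  proof -
    have "(\<Sum>k\<in>{1..N-1}. nu \<gamma> N k * (cmod (z k))^2) = (\<Sum>k\<in>{1..N-1}. 2 * (cmod (w k))^2 + 2 * \<gamma> * ((sin (real k * pi / real N))^2 * (cmod (w k))^2))"
      by (intro sum.cong refl) (auto simp: w_def nu_def lam_def algebra_simps)
    then show ?thesis unfolding W_def S_def by (simp add: sum.distrib sum_distrib_left)
  qed
  have "Rrem \<gamma> N z = (- real N / 4 + P - Q3 + Q4 / 4 + \<gamma> / 4 * D) / real N + 1/4 - W0 - (1/2) * (2 * W + 2 * \<gamma> * S)"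
    unfolding Rrem_def Gtilde_def G_N_def F W0z nuS ..
  also have "\<dots> = (Q4 / 4 - Q3) / real N"
    unfolding P2 D2 using N0 by (simp add: field_simps)
  also have "(Q4 / 4 - Q3) = (\<Sum>j<N. y j^4/4 - y j^3)"
    unfolding Q3_def Q4_def by (simp add: sum_subtractf sum_divide_distrib)
  finally show "Rrem \<gamma> N z = (\<Sum>j<N. y j^4/4 - y j^3) / real N" .
  show "(\<Sum>j<N. (y j)^2) = real N * (\<Sum>k<N. (cmod (w k))^2)" by (rule I2)
  show "(\<Sum>j<N. (y j)^4) = real N * (\<Sum>m<N. (cmod (\<Sum>k<N. w k * w ((m + N - k) mod N)))^2)" by (rule I4)
qed

definition Kc :: "real \<Rightarrow> real" where
  "Kc \<alpha> = 1 + 8 powr (4/3) * (2 * (\<Sum>n. real (Suc n) powr (-(4/3*(1-\<alpha>)))))"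
definition K2c :: "real \<Rightarrow> real" where
  "K2c \<alpha> = 1 + 64 * (2 * (\<Sum>n. real (Suc n) powr (-(2 - 2*\<alpha>))))"

lemma summ_Suc: fixes s :: real assumes "s > 1" shows "summable (\<lambda>n. real (Suc n) powr (-s))"
proof -
  have "summable (\<lambda>n. real n powr (-s))" using assms by (simp add: summable_real_powr_iff)
  then have "summable (\<lambda>n. real (n + 1) powr (-s))" by (rule summable_ignore_initial_segment)
  then show ?thesis by simp
qed

lemma main_bound:
  fixes \<mu> \<alpha> \<delta> :: real and N :: nat and z :: "nat \<Rightarrow> complex"
  assumes mu: "\<mu> \<ge> 1" and a0: "0 < \<alpha>" and a1: "\<alpha> < 1/4" and N3: "N \<ge> 3"
    and d0: "0 < \<delta>" and d1: "\<delta> < 1" and zC: "z \<in> C_delta (\<mu> * gamma1 N) \<alpha> N \<delta>"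
  shows "\<bar>Rrem (\<mu> * gamma1 N) N z\<bar> \<le> (Kc \<alpha>)^3 * \<delta>^3 + K2c \<alpha> * \<delta>^3"
proof -
  have N0: "N > 0" using N3 by simp
  have zh: "z \<in> hatR N" and b0: "cmod (z 0 + 1) \<le> \<delta> / sqrt 2"
    and bk: "\<And>k. k \<in> {1..N-1} \<Longrightarrow> cmod (z k) \<le> \<delta> * r_kN \<alpha> N k / sqrt (nu (\<mu> * gamma1 N) N k)"
    using zC unfolding C_delta_def by auto
  define w where "w = (\<lambda>k. z k + (if k = 0 then 1 else 0))"
  define y where "y = (\<lambda>j. Re (\<Sum>k<N. omega N ^ (j*k) * w k))"
  have R: "Rrem (\<mu> * gamma1 N) N z = (\<Sum>j<N. y j^4/4 - y j^3) / real N"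
    unfolding y_def w_def by (rule Rrem_formula(1)[OF N0 zh])
  have I2: "(\<Sum>j<N. (y j)^2) = real N * (\<Sum>k<N. (cmod (w k))^2)"
    unfolding y_def w_def by (rule Rrem_formula(2)[OF N0 zh])
  have I4: "(\<Sum>j<N. (y j)^4) = real N * (\<Sum>m<N. (cmod (\<Sum>k<N. w k * w ((m + N - k) mod N)))^2)"
    unfolding y_def w_def by (rule Rrem_formula(3)[OF N0 zh])
  define L2 where "L2 = (\<Sum>k<N. (cmod (w k))^2)"
  define L4 where "L4 = (\<Sum>m<N. (cmod (\<Sum>k<N. w k * w ((m + N - k) mod N)))^2)"
  define T where "T = (\<Sum>k<N. cmod (w k) powr (4/3))"
  define K where "K = Kc \<alpha>"
  define K2 where "K2 = K2c \<alpha>"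
  have L4T: "L4 \<le> T^3" unfolding L4_def T_def by (rule L4_bound)
  have T0: "T \<ge> 0" unfolding T_def by (simp add: sum_nonneg)
  have L20: "L2 \<ge> 0" unfolding L2_def by (simp add: sum_nonneg)
  have wk: "cmod (w k) \<le> \<delta> * (8 * real (min k (N - k)) powr (\<alpha> - 1))" if k: "k \<in> {1..N-1}" for k
  proof -
    have "w k = z k" using k unfolding w_def by auto
    moreover have "cmod (z k) \<le> \<delta> * (r_kN \<alpha> N k / sqrt (nu (\<mu> * gamma1 N) N k))"
      using bk[OF k] by simp
    moreover have "r_kN \<alpha> N k / sqrt (nu (\<mu> * gamma1 N) N k) \<le> 8 * real (min k (N - k)) powr (\<alpha> - 1)"
      using ratio_bound[OF N3 mu, of k \<alpha>] k by auto
    moreover have "\<delta> * (r_kN \<alpha> N k / sqrt (nu (\<mu> * gamma1 N) N k)) \<le> \<delta> * (8 * real (min k (N - k)) powr (\<alpha> - 1))"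
      by (rule mult_left_mono[OF calculation(3) less_imp_le[OF d0]])
    ultimately show ?thesis by simp
  qed
  have w0: "cmod (w 0) \<le> \<delta>"
  proof -
    have "\<delta> / sqrt 2 \<le> \<delta>" using d0 by (simp add: divide_le_eq)
    then show ?thesis using b0 unfolding w_def by simp
  qed
  define s1 where "s1 = 4/3*(1-\<alpha>)"
  have s1: "s1 > 1" unfolding s1_def using a1 by simp
  have Tb: "T \<le> \<delta> powr (4/3) * K"
  proof -
    have t0: "cmod (w 0) powr (4/3) \<le> \<delta> powr (4/3)" using w0 by (intro powr_mono2) auto
    have tk: "cmod (w k) powr (4/3) \<le> \<delta> powr (4/3) * 8 powr (4/3) * real (min k (N - k)) powr (-s1)"
      if k: "k \<in> {1..N-1}" for k
    proof -
      have dpos: "real (min k (N - k)) > 0" using k by auto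
      have "cmod (w k) powr (4/3) \<le> (\<delta> * (8 * real (min k (N - k)) powr (\<alpha> - 1))) powr (4/3)"
        using wk[OF k] by (intro powr_mono2) auto
      also have "\<dots> = \<delta> powr (4/3) * 8 powr (4/3) * (real (min k (N - k)) powr (\<alpha> - 1)) powr (4/3)"
        using d0 by (simp add: powr_mult)
      also have "(real (min k (N - k)) powr (\<alpha> - 1)) powr (4/3) = real (min k (N - k)) powr (-s1)"
      proof -
        have "(\<alpha> - 1) * (4/3) = -s1" unfolding s1_def by (simp add: field_simps)
        then show ?thesis by (simp only: powr_powr)
      qed
      finally show ?thesis .
    qed
    have "T = cmod (w 0) powr (4/3) + (\<Sum>k\<in>{1..N-1}. cmod (w k) powr (4/3))"
      unfolding T_def by (rule sum_split0[OF N0])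
    also have "\<dots> \<le> \<delta> powr (4/3) + (\<Sum>k\<in>{1..N-1}. \<delta> powr (4/3) * 8 powr (4/3) * real (min k (N - k)) powr (-s1))"
      using t0 tk by (intro add_mono sum_mono) auto
    also have "(\<Sum>k\<in>{1..N-1}. \<delta> powr (4/3) * 8 powr (4/3) * real (min k (N - k)) powr (-s1))
        = \<delta> powr (4/3) * 8 powr (4/3) * (\<Sum>k\<in>{1..N-1}. real (min k (N - k)) powr (-s1))"
      by (simp add: sum_distrib_left)
    also have "\<dots> \<le> \<delta> powr (4/3) * 8 powr (4/3) * (2 * (\<Sum>n. real (Suc n) powr (-s1)))"
      using sum_min_bound[OF s1, of N] by (intro mult_left_mono) auto
    finally show ?thesis unfolding K_def Kc_def s1_def by (simp add: algebra_simps)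
  qed
  have T3: "T^3 \<le> \<delta>^4 * K^3"
  proof -
    have "T^3 \<le> (\<delta> powr (4/3) * K)^3" using Tb T0 by (intro power_mono) auto
    also have "\<dots> = (\<delta> powr (4/3))^3 * K^3" by (simp add: power_mult_distrib)
    also have "(\<delta> powr (4/3))^3 = \<delta>^4" using d0 by (simp add: powr_power)
    finally show ?thesis .
  qed
  define s2 where "s2 = 2 - 2*\<alpha>"
  have s2: "s2 > 1" unfolding s2_def using a1 by simp
  have L2b: "L2 \<le> \<delta>^2 * K2"
  proof -
    have t0: "(cmod (w 0))^2 \<le> \<delta>^2" using w0 by (intro power_mono) auto
    have tk: "(cmod (w k))^2 \<le> \<delta>^2 * 64 * real (min k (N - k)) powr (-s2)"
      if k: "k \<in> {1..N-1}" for k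
    proof -
      have dpos: "real (min k (N - k)) > 0" using k by auto
      have "(cmod (w k))^2 \<le> (\<delta> * (8 * real (min k (N - k)) powr (\<alpha> - 1)))^2"
        using wk[OF k] by (intro power_mono) auto
      also have "\<dots> = \<delta>^2 * 64 * (real (min k (N - k)) powr (\<alpha> - 1))^2"
        by (simp add: power_mult_distrib)
      also have "(real (min k (N - k)) powr (\<alpha> - 1))^2 = real (min k (N - k)) powr (-s2)"
        using dpos unfolding s2_def by (simp add: powr_power algebra_simps)
      finally show ?thesis .
    qed
    have "L2 = (cmod (w 0))^2 + (\<Sum>k\<in>{1..N-1}. (cmod (w k))^2)"
      unfolding L2_def by (rule sum_split0[OF N0])
    also have "\<dots> \<le> \<delta>^2 + (\<Sum>k\<in>{1..N-1}. \<delta>^2 * 64 * real (min k (N - k)) powr (-s2))"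
      using t0 tk by (intro add_mono sum_mono) auto
    also have "(\<Sum>k\<in>{1..N-1}. \<delta>^2 * 64 * real (min k (N - k)) powr (-s2))
        = \<delta>^2 * 64 * (\<Sum>k\<in>{1..N-1}. real (min k (N - k)) powr (-s2))"
      by (simp add: sum_distrib_left)
    also have "\<dots> \<le> \<delta>^2 * 64 * (2 * (\<Sum>n. real (Suc n) powr (-s2)))"
      using sum_min_bound[OF s2, of N] by (intro mult_left_mono) auto
    finally show ?thesis unfolding K2_def K2c_def s2_def by (simp add: algebra_simps)
  qed
  have "\<bar>\<Sum>j<N. y j^4/4 - y j^3\<bar> \<le> (\<Sum>j<N. \<bar>y j^4/4 - y j^3\<bar>)" by (rule sum_abs)
  also have "\<dots> \<le> (\<Sum>j<N. y j^4/4 + (\<delta> * (y j)^2 + (y j)^4 / \<delta>) / 2)"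
  proof (rule sum_mono)
    fix j
    have a: "\<bar>y j^4/4 - y j^3\<bar> \<le> \<bar>y j^4/4\<bar> + \<bar>y j^3\<bar>" by (rule abs_triangle_ineq4)
    have b: "\<bar>y j^4/4\<bar> = y j^4/4" by simp
    have c: "\<bar>y j^3\<bar> = \<bar>y j\<bar>^3" by (rule power_abs)
    have "\<bar>y j^4/4 - y j^3\<bar> \<le> y j^4/4 + \<bar>y j\<bar>^3" using a unfolding b c .
    then show "\<bar>y j^4/4 - y j^3\<bar> \<le> y j^4/4 + (\<delta> * (y j)^2 + (y j)^4 / \<delta>) / 2"
      using cube_amgm[OF d0, of "y j"] by linarith
  qed
  also have "\<dots> = (\<Sum>j<N. (1/4 + 1/(2*\<delta>)) * (y j)^4 + \<delta>/2 * (y j)^2)"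
    using d0 by (intro sum.cong refl) (simp add: field_simps)
  also have "\<dots> = (1/4 + 1/(2*\<delta>)) * (\<Sum>j<N. (y j)^4) + \<delta>/2 * (\<Sum>j<N. (y j)^2)"
    by (simp only: sum.distrib sum_distrib_left)
  also have "\<dots> = real N * ((1/4 + 1/(2*\<delta>)) * L4 + \<delta>/2 * L2)"
    unfolding I2 I4 L2_def L4_def by (simp add: algebra_simps)
  finally have Rb: "\<bar>Rrem (\<mu> * gamma1 N) N z\<bar> \<le> (1/4 + 1/(2*\<delta>)) * L4 + \<delta>/2 * L2"
    unfolding R using N0 by (simp add: abs_divide divide_le_eq mult.commute)
  have sm1: "summable (\<lambda>n. real (Suc n) powr (-(4/3*(1-\<alpha>))))" using summ_Suc[OF s1] unfolding s1_def .
  have sm2: "summable (\<lambda>n. real (Suc n) powr (-(2 - 2*\<alpha>)))" using summ_Suc[OF s2] unfolding s2_def .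
  have K0: "K \<ge> 0" unfolding K_def Kc_def
    by (intro add_nonneg_nonneg mult_nonneg_nonneg suminf_nonneg sm1) auto
  have K20: "K2 \<ge> 0" unfolding K2_def K2c_def
    by (intro add_nonneg_nonneg mult_nonneg_nonneg suminf_nonneg sm2) auto
  have "(1/4 + 1/(2*\<delta>)) * L4 \<le> (1/4 + 1/(2*\<delta>)) * (\<delta>^4 * K^3)"
    using L4T T3 d0 by (intro mult_left_mono) auto
  also have "\<dots> = (\<delta>/4 + 1/2) * \<delta>^3 * K^3" using d0 by (simp add: field_simps power_eq_if)
  also have "\<dots> \<le> 1 * \<delta>^3 * K^3" using d0 d1 K0 by (intro mult_right_mono) auto
  finally have e1: "(1/4 + 1/(2*\<delta>)) * L4 \<le> \<delta>^3 * K^3" by simp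
  have "\<delta>/2 * L2 \<le> \<delta>/2 * (\<delta>^2 * K2)" using L2b d0 by (intro mult_left_mono) auto
  also have "\<dots> \<le> \<delta>^3 * K2" using d0 K20 by (simp add: power_eq_if field_simps)
  finally have e2: "\<delta>/2 * L2 \<le> \<delta>^3 * K2" .
  show ?thesis using Rb e1 e2 unfolding K_def K2_def by (simp add: algebra_simps)
qed

theorem lemma4p11:
  fixes \<mu> \<alpha> :: real
  assumes "\<mu> > 1" and "0 < \<alpha>" and "\<alpha> < 1/4"
  shows "\<exists>A9 \<delta>0. \<delta>0 > 0 \<and>
    (\<forall>N::nat. N \<ge> 3 \<longrightarrow> (\<forall>\<delta>. 0 < \<delta> \<and> \<delta> < \<delta>0 \<longrightarrow>
      (\<forall>z \<in> C_delta (\<mu> * gamma1 N) \<alpha> N \<delta>.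
         \<bar>Rrem (\<mu> * gamma1 N) N z\<bar> \<le> A9 * \<delta> ^ 3)))"
proof -
  have mu: "\<mu> \<ge> 1" using assms(1) by simp
  have "\<forall>N::nat. N \<ge> 3 \<longrightarrow> (\<forall>\<delta>. 0 < \<delta> \<and> \<delta> < 1 \<longrightarrow>
      (\<forall>z \<in> C_delta (\<mu> * gamma1 N) \<alpha> N \<delta>.
         \<bar>Rrem (\<mu> * gamma1 N) N z\<bar> \<le> ((Kc \<alpha>)^3 + K2c \<alpha>) * \<delta> ^ 3))"
    using main_bound[OF mu assms(2) assms(3)] by (simp add: distrib_right)
  then show ?thesis by (intro exI[of _ "(Kc \<alpha>)^3 + K2c \<alpha>"] exI[of _ "1::real"]) simp
qed

end
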